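(* Let $(M,d)$ be a bounded metric space with metric normal structure such that $\mathcal A(M)$ is compact, and let $T:M\to M$ be orbit-nonexpansive. Then $T$ has a fixed point, and the fixed point set $\mathrm{Fix}(T)$ is a one-local retract of $M$.
   Context: For a metric space $(M,d)$, a mapping $T:M\to M$ and $x\in M$, the orbit of $x$ is $o_T(x)=\{x\}\cup\{T^nx:n\in\mathbb N\}$. For $x\in M$ and bounded $A\subseteq M$, $D(x,A)=\sup\{d(x,a):a\in A\}$ and $\delta(A)=\sup\{d(x,y):x,y\in A\}$. A mapping $T:M\to M$ is orbit-nonexpansive if $d(Tx,Ty)\le D(x,o_T(y))$ for all $x,y\in M$. A subset of $M$ is admissible if it is an intersection of closed balls of $M$; $\mathcal A(M)$ denotes the family of admissible sets. $\mathcal A(M)$ is compact if every subfamily of $\mathcal A(M)$ all of whose finite intersections are nonempty has nonempty intersection. $(M,d)$ has metric normal structure if for every admissible set $A$ with more than one point there exists $z_A\in A$ with $D(z_A,A)<\delta(A)$. A subset $E\subseteq M$ is a one-local retract of $M$ if for every family of closed balls with centers in $E$ having nonempty intersection, that intersection meets $E$. *)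

theory Defs
  imports "HOL-Analysis.Analysis"
begin

text \<open>The metric space M is the whole type 'a (of class metric_space), with metric dist.\<close>

definition orbit :: "('a \<Rightarrow> 'a) \<Rightarrow> 'a \<Rightarrow> 'a set" where
  "orbit T x = {x} \<union> {(T ^^ n) x | n. n \<ge> 1}"

definition Dist :: "'a::metric_space \<Rightarrow> 'a set \<Rightarrow> real" where
  "Dist x A = (SUP a\<in>A. dist x a)"

definition diam_set :: "'a::metric_space set \<Rightarrow> real" where
  "diam_set A = (SUP p\<in>A \<times> A. dist (fst p) (snd p))"

definition orbit_nonexpansive :: "('a::metric_space \<Rightarrow> 'a) \<Rightarrow> bool" where
  "orbit_nonexpansive T \<longleftrightarrow> (\<forall>x y. dist (T x) (T y) \<le> Dist x (orbit T y))"

text \<open>Admissible sets: intersections of (arbitrary families of) closed balls of M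
  (the empty family gives M itself).\<close>
definition admissible :: "'a::metric_space set \<Rightarrow> bool" where
  "admissible A \<longleftrightarrow> (\<exists>B::('a \<times> real) set. A = (\<Inter>(c, r)\<in>B. cball c r))"

definition admissible_compact :: "'a::metric_space itself \<Rightarrow> bool" where
  "admissible_compact _ \<longleftrightarrow>
     (\<forall>F::'a set set. F \<subseteq> Collect admissible \<longrightarrow>
        (\<forall>G. G \<subseteq> F \<longrightarrow> finite G \<longrightarrow> \<Inter>G \<noteq> {}) \<longrightarrow> \<Inter>F \<noteq> {})"

definition metric_normal_structure :: "'a::metric_space itself \<Rightarrow> bool" where
  "metric_normal_structure _ \<longleftrightarrow>
     (\<forall>A::'a set. admissible A \<and> (\<exists>x y. x \<in> A \<and> y \<in> A \<and> x \<noteq> y) \<longrightarrow>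
        (\<exists>z\<in>A. Dist z A < diam_set A))"

definition one_local_retract :: "'a::metric_space set \<Rightarrow> bool" where
  "one_local_retract E \<longleftrightarrow>
     (\<forall>B::('a \<times> real) set. fst ` B \<subseteq> E \<longrightarrow>
        (\<Inter>(c, r)\<in>B. cball c r) \<noteq> {} \<longrightarrow> (\<Inter>(c, r)\<in>B. cball c r) \<inter> E \<noteq> {})"

end

theory Submission
  imports Defs
begin

lemma Zorn_min:
  assumes "\<And>C. C \<subseteq> F \<Longrightarrow> (\<forall>X\<in>C. \<forall>Y\<in>C. X \<subseteq> Y \<or> Y \<subseteq> X) \<Longrightarrow> \<exists>L\<in>F. \<forall>X\<in>C. L \<subseteq> X"
  shows "\<exists>M\<in>F. \<forall>X\<in>F. X \<subseteq> M \<longrightarrow> X = M"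
proof -
  have "\<exists>M\<in>uminus ` F. \<forall>X\<in>uminus ` F. M \<subseteq> X \<longrightarrow> X = M"
  proof (rule subset_Zorn)
    fix C assume ch: "subset.chain (uminus ` F) C"
    have CF: "C \<subseteq> uminus ` F" and tot: "\<forall>X\<in>C. \<forall>Y\<in>C. X \<subseteq> Y \<or> Y \<subseteq> X"
      using ch unfolding subset_chain_def by blast+
    have 1: "uminus ` C \<subseteq> F"
    proof
      fix x assume "x \<in> uminus ` C"
      then obtain y where y: "y \<in> C" "x = - y" by blast
      then obtain z where z: "z \<in> F" "y = - z" using CF by blast
      then show "x \<in> F" using y by simp
    qed
    have 2: "\<forall>X\<in>uminus ` C. \<forall>Y\<in>uminus ` C. X \<subseteq> Y \<or> Y \<subseteq> X"
    proof (intro ballI)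
      fix X Y assume "X \<in> uminus ` C" "Y \<in> uminus ` C"
      then obtain X' Y' where "X' \<in> C" "Y' \<in> C" "X = - X'" "Y = - Y'" by blast
      then show "X \<subseteq> Y \<or> Y \<subseteq> X" using tot by (metis Compl_subset_Compl_iff)
    qed
    obtain L where L: "L \<in> F" "\<forall>X\<in>uminus ` C. L \<subseteq> X" using assms[OF 1 2] by blast
    have "\<forall>X\<in>C. X \<subseteq> - L"
    proof
      fix X assume "X \<in> C"
      then have "- X \<in> uminus ` C" by (rule imageI)
      then have "L \<subseteq> - X" using L(2) by (rule_tac bspec) auto
      then show "X \<subseteq> - L" by auto
    qed
    moreover have "- L \<in> uminus ` F" using L(1) by (rule imageI)
    ultimately show "\<exists>U\<in>uminus ` F. \<forall>X\<in>C. X \<subseteq> U" by (rule_tac bexI[of _ "- L"])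
  qed
  then obtain M' where M': "M' \<in> uminus ` F" "\<forall>X\<in>uminus ` F. M' \<subseteq> X \<longrightarrow> X = M'" by blast
  from M'(1) obtain M where M: "M \<in> F" "M' = - M" by (rule imageE) simp
  have "X = M" if "X \<in> F" "X \<subseteq> M" for X
  proof -
    have "- X \<in> uminus ` F" using that(1) by (rule imageI)
    moreover have "M' \<subseteq> - X" using that(2) M(2) by auto
    ultimately have "- X = M'" using M'(2) by blast
    then have "- X = - M" using M(2) by simp
    then show ?thesis by simp
  qed
  then show ?thesis using M(1) by (intro bexI[of _ M]) auto
qed

lemma admissible_Inter:
  assumes "\<forall>S\<in>SS. admissible S"
  shows "admissible (\<Inter>SS)"
proof -
  define B where "B S = (SOME B::('a \<times> real) set. S = (\<Inter>(c, r)\<in>B. cball c r))" for S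
  have B: "(\<Inter>(c, r)\<in>B S. cball c r) = S" if "S \<in> SS" for S
  proof -
    have "\<exists>B::('a \<times> real) set. S = (\<Inter>(c, r)\<in>B. cball c r)" using assms that unfolding admissible_def by blast
    then have "S = (\<Inter>(c, r)\<in>B S. cball c r)" unfolding B_def by (rule someI_ex)
    then show ?thesis by (rule sym)
  qed
  have "\<Inter>SS = (\<Inter>(c, r)\<in>(\<Union>S\<in>SS. B S). cball c r)"
  proof
    show "\<Inter>SS \<subseteq> (\<Inter>(c, r)\<in>(\<Union>S\<in>SS. B S). cball c r)"
    proof clarify
      fix x a b S assume x: "x \<in> \<Inter>SS" and S: "S \<in> SS" and ab: "(a, b) \<in> B S"
      have "x \<in> S" using x S by blast
      then have "x \<in> (\<Inter>(c, r)\<in>B S. cball c r)" by (simp only: B[OF S])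
      then show "x \<in> cball a b" using ab by blast
    qed
    show "(\<Inter>(c, r)\<in>(\<Union>S\<in>SS. B S). cball c r) \<subseteq> \<Inter>SS"
    proof
      fix x assume x: "x \<in> (\<Inter>(c, r)\<in>(\<Union>S\<in>SS. B S). cball c r)"
      show "x \<in> \<Inter>SS"
      proof
        fix S assume S: "S \<in> SS"
        have "x \<in> (\<Inter>(c, r)\<in>B S. cball c r)" using x S by blast
        then show "x \<in> S" by (simp only: B[OF S])
      qed
    qed
  qed
  then show ?thesis unfolding admissible_def by (rule exI)
qed

lemma admissible_cball: "admissible (cball c r)"
  unfolding admissible_def by (intro exI[of _ "{(c, r)}"]) auto

lemma admissible_UNIV: "admissible UNIV"
  unfolding admissible_def by (intro exI[of _ "{}"]) auto

lemma bdd_dist: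
  assumes "bounded (UNIV :: 'a::metric_space set)"
  shows "bdd_above ((\<lambda>y. dist x y) ` (S::'a set))"
proof -
  obtain a e where ae: "\<forall>y::'a. dist a y \<le> e" using assms unfolding bounded_def by auto
  have "dist x y \<le> dist x a + e" for y
    using dist_triangle[of x y a] ae by (metis add_left_mono dist_commute order_trans)
  then show ?thesis by (intro bdd_aboveI[of _ "dist x a + e"]) auto
qed

lemma orbit_sub:
  assumes "T ` K \<subseteq> K" "x \<in> K"
  shows "orbit T x \<subseteq> K"
proof -
  have "(T ^^ n) x \<in> K" for n
    by (induction n) (use assms in auto)
  then show ?thesis unfolding orbit_def using assms by auto
qed

lemma orbit_fix:
  assumes "T c = c" shows "orbit T c = {c}"
proof -
  have "(T ^^ n) c = c" for n by (induction n) (use assms in auto)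
  then show ?thesis unfolding orbit_def by auto
qed

lemma fp_in:
  fixes T :: "'a::metric_space \<Rightarrow> 'a"
  assumes bd: "bounded (UNIV :: 'a set)"
    and ns: "metric_normal_structure TYPE('a)"
    and ac: "admissible_compact TYPE('a)"
    and on: "orbit_nonexpansive T"
    and A: "admissible A" "A \<noteq> {}" "T ` A \<subseteq> A"
  shows "\<exists>x\<in>A. T x = x"
proof -
  define F where "F = {S. S \<subseteq> A \<and> S \<noteq> {} \<and> admissible S \<and> T ` S \<subseteq> S}"
  have "\<exists>M\<in>F. \<forall>X\<in>F. X \<subseteq> M \<longrightarrow> X = M"
  proof (rule Zorn_min)
    fix C assume CF: "C \<subseteq> F" and ch: "\<forall>X\<in>C. \<forall>Y\<in>C. X \<subseteq> Y \<or> Y \<subseteq> X"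
    define L where "L = \<Inter>(insert A C)"
    have adm: "admissible L" unfolding L_def
      using CF A by (intro admissible_Inter) (auto simp: F_def)
    have ne: "L \<noteq> {}"
    proof -
      have "\<Inter>(insert A C) \<noteq> {}"
        using ac unfolding admissible_compact_def
      proof (elim allE impE)
        show "insert A C \<subseteq> Collect admissible" using CF A by (auto simp: F_def)
        show "\<forall>G. G \<subseteq> insert A C \<longrightarrow> finite G \<longrightarrow> \<Inter> G \<noteq> {}"
        proof (intro allI impI)
          fix G assume G: "G \<subseteq> insert A C" "finite G"
          show "\<Inter>G \<noteq> {}"
          proof (cases "G \<inter> C = {}")
            case True
            then have "G \<subseteq> {A}" using G by auto
            then have "A \<subseteq> \<Inter>G" by auto
            then show ?thesis using A by auto
          next
            case False
            have "subset.chain C (G \<inter> C)" using ch by (auto simp: subset_chain_def)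
            then have m: "\<Inter>(G \<inter> C) \<in> G \<inter> C" using Inter_in_chain[of "G \<inter> C" C] False G by auto
            then have "\<Inter>(G \<inter> C) \<in> F" using CF by auto
            then have sub: "\<Inter>(G \<inter> C) \<subseteq> A" "\<Inter>(G \<inter> C) \<noteq> {}" by (auto simp: F_def)
            have "\<Inter>(G \<inter> C) \<subseteq> \<Inter>G" using G sub(1) by auto
            then show ?thesis using sub(2) by auto
          qed
        qed
      qed
      then show ?thesis by (simp add: L_def)
    qed
    have inv: "T ` L \<subseteq> L"
    proof
      fix y assume "y \<in> T ` L"
      then obtain x where x: "x \<in> L" "y = T x" by auto
      have "T x \<in> S" if "S \<in> insert A C" for S
      proof -
        have "T ` S \<subseteq> S" using that CF A by (auto simp: F_def)
        moreover have "x \<in> S" using x that by (auto simp: L_def)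
        ultimately show ?thesis by auto
      qed
      then show "y \<in> L" using x by (auto simp: L_def)
    qed
    have "L \<in> F" using adm ne inv by (auto simp: F_def L_def)
    then show "\<exists>L\<in>F. \<forall>X\<in>C. L \<subseteq> X" by (intro bexI[of _ L]) (auto simp: L_def)
  qed
  then obtain K where K: "K \<in> F" and min: "\<And>X. X \<in> F \<Longrightarrow> X \<subseteq> K \<Longrightarrow> X = K" by blast
  have KA: "K \<subseteq> A" "K \<noteq> {}" "admissible K" "T ` K \<subseteq> K" using K by (auto simp: F_def)
  have key: "K \<subseteq> cball c r" if "T ` K \<subseteq> cball c r" for c r
  proof -
    define H where "H = (\<Inter>(c, r)\<in>{(c, r). T ` K \<subseteq> cball c r}. cball c r)"
    have admH: "admissible H" unfolding H_def admissible_def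
      by (rule exI[of _ "{(c, r). T ` K \<subseteq> cball c r}"]) (rule refl)
    have TKH: "T ` K \<subseteq> H" unfolding H_def by auto
    obtain B where B: "K = (\<Inter>(c, r)\<in>B. cball c r)" using KA(3) unfolding admissible_def by blast
    have "H \<subseteq> K"
    proof
      fix x assume x: "x \<in> H"
      show "x \<in> K" unfolding B
      proof clarify
        fix a b assume ab: "(a, b) \<in> B"
        have "K \<subseteq> cball a b" using ab B by blast
        then have "T ` K \<subseteq> cball a b" using KA(4) by auto
        then show "x \<in> cball a b" using x unfolding H_def by blast
      qed
    qed
    moreover have "T ` H \<subseteq> H" using \<open>H \<subseteq> K\<close> TKH by blast
    moreover have "H \<noteq> {}" using TKH KA(2) by auto
    ultimately have "H \<in> F" using admH KA(1) by (auto simp: F_def)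
    then have "H = K" using min \<open>H \<subseteq> K\<close> by blast
    moreover have "H \<subseteq> cball c r" using that unfolding H_def by blast
    ultimately show ?thesis by simp
  qed
  have single: "\<not> (\<exists>x y. x \<in> K \<and> y \<in> K \<and> x \<noteq> y)"
  proof
    assume two: "\<exists>x y. x \<in> K \<and> y \<in> K \<and> x \<noteq> y"
    have "\<exists>z\<in>K. Dist z K < diam_set K"
      using ns KA(3) two unfolding metric_normal_structure_def by (elim allE[of _ K]) simp
    then obtain z where z: "z \<in> K" "Dist z K < diam_set K" by blast
    define s where "s = Dist z K"
    define Kc where "Kc = K \<inter> (\<Inter>x\<in>K. cball x s)"
    have admKc: "admissible Kc" unfolding Kc_def
      using admissible_Inter[of "insert K ((\<lambda>x. cball x s) ` K)"] KA(3) admissible_cball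
      by auto
    have distle: "dist w x \<le> Dist w K" if "w \<in> K" "x \<in> K" for w x
      unfolding Dist_def using that bdd_dist[OF bd] by (intro cSUP_upper) auto
    have "dist x z \<le> s" if "x \<in> K" for x
      using distle[OF z(1) that] by (simp add: s_def dist_commute)
    then have zKc: "z \<in> Kc" unfolding Kc_def using z(1) by auto
    have invKc: "T ` Kc \<subseteq> Kc"
    proof
      fix y assume "y \<in> T ` Kc"
      then obtain w where w: "w \<in> Kc" "y = T w" by auto
      have wK: "w \<in> K" and ws: "\<And>a. a \<in> K \<Longrightarrow> dist a w \<le> s" using w by (auto simp: Kc_def)
      have "T ` K \<subseteq> cball (T w) s"
      proof
        fix v assume "v \<in> T ` K"
        then obtain x where x: "x \<in> K" "v = T x" by auto
        have "dist (T w) (T x) \<le> Dist w (orbit T x)" using on unfolding orbit_nonexpansive_def by blast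
        also have "\<dots> \<le> s" unfolding Dist_def
        proof (rule cSUP_least)
          show "orbit T x \<noteq> {}" unfolding orbit_def by auto
          fix a assume "a \<in> orbit T x"
          then have "a \<in> K" using orbit_sub[OF KA(4) x(1)] by auto
          then show "dist w a \<le> s" using ws by (simp add: dist_commute)
        qed
        finally show "v \<in> cball (T w) s" using x by simp
      qed
      then have "K \<subseteq> cball (T w) s" using key by blast
      then show "y \<in> Kc" using w wK KA(4) by (auto simp: Kc_def dist_commute)
    qed
    have "Kc \<in> F" using admKc zKc invKc KA(1) by (auto simp: F_def Kc_def)
    then have "Kc = K" using min by (auto simp: Kc_def)
    have all: "dist x y \<le> s" if "x \<in> K" "y \<in> K" for x y
    proof -
      have "y \<in> Kc" using that \<open>Kc = K\<close> by simp
      then have "y \<in> cball x s" using that(1) unfolding Kc_def by blast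
      then show ?thesis by simp
    qed
    have "diam_set K \<le> s" unfolding diam_set_def
      using all KA(2) by (intro cSUP_least) auto
    then show False using z s_def by simp
  qed
  obtain p where p: "p \<in> K" using KA(2) by auto
  then have "T p \<in> K" using KA(4) by auto
  then have "T p = p" using single p by blast
  then show ?thesis using p KA(1) by auto
qed

theorem corollary3p6:
  fixes T :: "'a::metric_space \<Rightarrow> 'a"
  assumes "bounded (UNIV :: 'a set)"
    and "metric_normal_structure TYPE('a)"
    and "admissible_compact TYPE('a)"
    and "orbit_nonexpansive T"
  shows "(\<exists>x. T x = x) \<and> one_local_retract {x. T x = x}"
proof
  show "\<exists>x. T x = x" using fp_in[OF assms admissible_UNIV] by auto
  show "one_local_retract {x. T x = x}"
    unfolding one_local_retract_def
  proof (intro allI impI)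
    fix B :: "('a \<times> real) set"
    assume fB: "fst ` B \<subseteq> {x. T x = x}" and ne: "(\<Inter>(c, r)\<in>B. cball c r) \<noteq> {}"
    define A where "A = (\<Inter>(c, r)\<in>B. cball c r)"
    have admA: "admissible A" unfolding A_def admissible_def
      by (rule exI[of _ B]) (rule refl)
    have inv: "T ` A \<subseteq> A"
    proof
      fix y assume "y \<in> T ` A"
      then obtain x where x: "x \<in> A" "y = T x" by auto
      show "y \<in> A" unfolding A_def
      proof clarify
        fix c r assume cr: "(c, r) \<in> B"
        have "c \<in> fst ` B" using cr by (metis fst_conv image_eqI)
        then have Tc: "T c = c" using fB by blast
        have "dist (T x) (T c) \<le> Dist x (orbit T c)"
          using assms(4) unfolding orbit_nonexpansive_def by blast
        also have "\<dots> = dist x c" by (simp add: orbit_fix[of T c, OF Tc] Dist_def)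
        also have "\<dots> \<le> r" using x cr unfolding A_def by (auto simp: dist_commute)
        finally show "y \<in> cball c r" using x Tc by (simp add: dist_commute)
      qed
    qed
    obtain x where "x \<in> A" "T x = x" using fp_in[OF assms admA _ inv] ne A_def by auto
    then show "(\<Inter>(c, r)\<in>B. cball c r) \<inter> {x. T x = x} \<noteq> {}" unfolding A_def by auto
  qed
qed

end
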